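(* Let $\overline{G}$ be the roommate diversity game described in the context. No top-type outcome of $\overline{G}$ is popular.
   Context: In a roommate diversity game with agent set $N=R\cup B$ ($R$ red, $B$ blue) and room size $s$, an outcome is a partition of $N$ into rooms of size $s$; $\pi(a)$ is the room containing $a$ and $\theta(C)=|C\cap R|/|C|$. Each agent $a$ has a trichotomous preference given by a partition of the fractions into sets $D_a^+$ (approved), $D_a^n$ (neutral), $D_a^-$ (disapproved), possibly empty, with approved $\succ$ neutral $\succ$ disapproved and indifference within each set. Agent $a$ prefers $\pi$ to $\pi'$ if it strictly prefers $\theta(\pi(a))$ to $\theta(\pi'(a))$; $N(\pi,\pi')$ is the set of agents preferring $\pi$ to $\pi'$, $\phi(\pi,\pi')=|N(\pi,\pi')|-|N(\pi',\pi)|$, and $\pi$ is popular if $\phi(\pi,\pi')\ge0$ for all outcomes $\pi'$. The game $\overline{G}$: $R=\{r_1,r_2,r_3\}$, $B=\{b_1,\dots,b_6\}$, $s=3$; $r_1$: $D^+=\{1/3\}$, $D^-=\{2/3,1\}$; $r_2,r_3$: $D^+=\{2/3\}$, $D^-=\{1/3,1\}$; $b_1,\dots,b_4$: $D^+=\{1/3\}$, $D^n=\{2/3\}$, $D^-=\{0\}$; $b_5,b_6$: $D^+=\{0\}$, $D^-=\{1/3,2/3\}$ (a red agent is never in a room of fraction $0$, a blue agent never in one of fraction $1$). An outcome is top-type if it equals $\{\{r_1,\hat b_1,\hat b_2\},\{r_2,r_3,\hat b_3\},\{b_5,b_6,\hat b_4\}\}$ for some enumeration $\hat b_1,\dots,\hat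 b_4$ of $\{b_1,b_2,b_3,b_4\}$. *)

theory Defs
  imports Complex_Main "HOL-Library.Disjoint_Sets"
begin

text \<open>Agents form the (finite) universe of type 'a, i.e. N = UNIV. R is the set of red
agents (the others are blue); s is the room size.\<close>

definition outcome :: "nat \<Rightarrow> 'a set set \<Rightarrow> bool" where
  "outcome s P \<longleftrightarrow> partition_on (UNIV :: 'a set) P \<and> (\<forall>C\<in>P. card C = s)"

definition room :: "'a set set \<Rightarrow> 'a \<Rightarrow> 'a set" where
  "room P a = (THE C. C \<in> P \<and> a \<in> C)"

definition theta :: "'a set \<Rightarrow> 'a set \<Rightarrow> real" where
  "theta R C = real (card (C \<inter> R)) / real (card C)"

text \<open>A trichotomous preference is a triple (D+, Dn, D-) of sets of fractions.
Rank 2 = approved, 1 = neutral, 0 = disapproved.\<close>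

type_synonym tripref = "real set \<times> real set \<times> real set"

definition rank :: "tripref \<Rightarrow> real \<Rightarrow> nat" where
  "rank D x = (if x \<in> fst D then 2 else if x \<in> fst (snd D) then 1 else 0)"

definition prefers :: "'a set \<Rightarrow> ('a \<Rightarrow> tripref) \<Rightarrow> 'a \<Rightarrow> 'a set set \<Rightarrow> 'a set set \<Rightarrow> bool" where
  "prefers R pref a P P' \<longleftrightarrow>
     rank (pref a) (theta R (room P' a)) < rank (pref a) (theta R (room P a))"

definition phi :: "'a set \<Rightarrow> ('a \<Rightarrow> tripref) \<Rightarrow> 'a set set \<Rightarrow> 'a set set \<Rightarrow> int" where
  "phi R pref P P' = int (card {a. prefers R pref a P P'}) - int (card {a. prefers R pref a P' P})"

definition popular :: "nat \<Rightarrow> 'a set \<Rightarrow> ('a \<Rightarrow> tripref) \<Rightarrow> 'a set set \<Rightarrow> bool" where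
  "popular s R pref P \<longleftrightarrow> outcome s P \<and> (\<forall>P'. outcome s P' \<longrightarrow> phi R pref P P' \<ge> 0)"

datatype agent = r1 | r2 | r3 | b1 | b2 | b3 | b4 | b5 | b6

lemma UNIV_agent: "(UNIV :: agent set) = {r1, r2, r3, b1, b2, b3, b4, b5, b6}"
  by (auto intro: agent.exhaust)

instance agent :: finite
  by standard (simp add: UNIV_agent)

definition Red :: "agent set" where
  "Red = {r1, r2, r3}"

definition Gpref :: "agent \<Rightarrow> tripref" where
  "Gpref a = (case a of
      r1 \<Rightarrow> ({1/3}, {}, {2/3, 1})
    | r2 \<Rightarrow> ({2/3}, {}, {1/3, 1})
    | r3 \<Rightarrow> ({2/3}, {}, {1/3, 1})
    | b1 \<Rightarrow> ({1/3}, {2/3}, {0})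
    | b2 \<Rightarrow> ({1/3}, {2/3}, {0})
    | b3 \<Rightarrow> ({1/3}, {2/3}, {0})
    | b4 \<Rightarrow> ({1/3}, {2/3}, {0})
    | b5 \<Rightarrow> ({0}, {}, {1/3, 2/3})
    | b6 \<Rightarrow> ({0}, {}, {1/3, 2/3}))"

definition top_type :: "agent set set \<Rightarrow> bool" where
  "top_type P \<longleftrightarrow> (\<exists>h1 h2 h3 h4. distinct [h1, h2, h3, h4] \<and> {h1, h2, h3, h4} = {b1, b2, b3, b4}
      \<and> P = {{r1, h1, h2}, {r2, r3, h3}, {b5, b6, h4}})"

end

theory Submission imports Defs begin

lemma room3:
  assumes "partition_on UNIV {A,B,C}"
  shows "room {A,B,C} a = (if a \<in> A then A else if a \<in> B then B else C)"
proof -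
  from assms have d: "\<And>X Y. X \<in> {A,B,C} \<Longrightarrow> Y \<in> {A,B,C} \<Longrightarrow> X \<noteq> Y \<Longrightarrow> X \<inter> Y = {}"
    and u: "\<Union>{A,B,C} = UNIV"
    unfolding partition_on_def disjoint_def by auto
  let ?R = "(if a \<in> A then A else if a \<in> B then B else C)"
  have m: "?R \<in> {A,B,C} \<and> a \<in> ?R" using u by auto
  show ?thesis unfolding room_def
  proof (rule the_equality)
    show "?R \<in> {A,B,C} \<and> a \<in> ?R" by (rule m)
    fix X assume "X \<in> {A,B,C} \<and> a \<in> X"
    then show "X = ?R" using d[of X ?R] m by blast
  qed
qed

lemma gen:
  assumes hb: "h1 \<in> {b1,b2,b3,b4}" "h2 \<in> {b1,b2,b3,b4}" "h3 \<in> {b1,b2,b3,b4}" "h4 \<in> {b1,b2,b3,b4}"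
    and dist: "distinct [h1, h2, h3, h4]" and eq: "{h1, h2, h3, h4} = {b1, b2, b3, b4}"
  shows "\<not> popular 3 Red Gpref {{r1, h1, h2}, {r2, r3, h3}, {b5, b6, h4}}"
proof -
  let ?P = "{{r1, h1, h2}, {r2, r3, h3}, {b5, b6, h4}}"
  let ?Q = "{{r1, h1, h3}, {r2, r3, h4}, {h2, b5, b6}}"
  have G: "\<And>h. h \<in> {b1,b2,b3,b4} \<Longrightarrow> Gpref h = ({1/3}, {2/3}, {0})
          \<and> h \<noteq> r1 \<and> h \<noteq> r2 \<and> h \<noteq> r3 \<and> h \<noteq> b5 \<and> h \<noteq> b6 \<and> h \<notin> Red"
    by (auto simp: Gpref_def Red_def)
  note G1 = G[OF hb(1)] and G2 = G[OF hb(2)] and G3 = G[OF hb(3)] and G4 = G[OF hb(4)]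
  have U: "(UNIV :: agent set) = {r1,r2,r3,b5,b6,h1,h2,h3,h4}"
    using eq UNIV_agent by auto
  have c: "card {r1,r2,r3,b5,b6,h1,h2,h3,h4} = 9"
    using dist G1 G2 G3 G4 by auto
  have pq: "partition_on UNIV ?Q" "partition_on UNIV ?P"
    unfolding partition_on_def disjoint_def U using dist G1 G2 G3 G4 by auto
  have oq: "outcome 3 ?Q" unfolding outcome_def using pq dist G1 G2 G3 G4 by auto
  have th: "theta Red {r1, h1, h2} = 1/3" "theta Red {r2, r3, h3} = 2/3" "theta Red {b5, b6, h4} = 0"
     "theta Red {r1, h1, h3} = 1/3" "theta Red {r2, r3, h4} = 2/3" "theta Red {h2, b5, b6} = 0"
    unfolding theta_def using dist G1 G2 G3 G4 by (auto simp: Red_def)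
  have ne: "h1 \<noteq> h2" "h1 \<noteq> h3" "h1 \<noteq> h4" "h2 \<noteq> h3" "h2 \<noteq> h4" "h3 \<noteq> h4"
    "h2 \<noteq> h1" "h3 \<noteq> h1" "h4 \<noteq> h1" "h3 \<noteq> h2" "h4 \<noteq> h2" "h4 \<noteq> h3"
    using dist by auto
  have ne2: "h1 \<noteq> r1" "h1 \<noteq> r2" "h1 \<noteq> r3" "h1 \<noteq> b5" "h1 \<noteq> b6"
    "h2 \<noteq> r1" "h2 \<noteq> r2" "h2 \<noteq> r3" "h2 \<noteq> b5" "h2 \<noteq> b6"
    "h3 \<noteq> r1" "h3 \<noteq> r2" "h3 \<noteq> r3" "h3 \<noteq> b5" "h3 \<noteq> b6"
    "h4 \<noteq> r1" "h4 \<noteq> r2" "h4 \<noteq> r3" "h4 \<noteq> b5" "h4 \<noteq> b6"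
    using G1 G2 G3 G4 by auto
  note ne3 = ne2[symmetric]
  have gp: "Gpref h1 = ({1/3}, {2/3}, {0})" "Gpref h2 = ({1/3}, {2/3}, {0})"
     "Gpref h3 = ({1/3}, {2/3}, {0})" "Gpref h4 = ({1/3}, {2/3}, {0})"
    using G1 G2 G3 G4 by auto
  have gpc: "Gpref r1 = ({1/3}, {}, {2/3, 1})" "Gpref r2 = ({2/3}, {}, {1/3, 1})" "Gpref r3 = ({2/3}, {}, {1/3, 1})"
    "Gpref b5 = ({0}, {}, {1/3, 2/3})" "Gpref b6 = ({0}, {}, {1/3, 2/3})" by (simp_all add: Gpref_def)
  define pr where "pr = (\<lambda>a. rank (Gpref a) (theta Red (room ?P a)))"
  define qr where "qr = (\<lambda>a. rank (Gpref a) (theta Red (room ?Q a)))"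
  have RP: "room ?P = (\<lambda>a. if a \<in> {r1, h1, h2} then {r1, h1, h2} else if a \<in> {r2, r3, h3} then {r2, r3, h3} else {b5, b6, h4})"
    using room3[OF pq(2)] by auto
  have RQ: "room ?Q = (\<lambda>a. if a \<in> {r1, h1, h3} then {r1, h1, h3} else if a \<in> {r2, r3, h4} then {r2, r3, h4} else {h2, b5, b6})"
    using room3[OF pq(1)] by auto
  have vals: "pr r1 = 2" "pr r2 = 2" "pr r3 = 2" "pr b5 = 2" "pr b6 = 2" "pr h1 = 2" "pr h2 = 2" "pr h3 = 1" "pr h4 = 0"
    "qr r1 = 2" "qr r2 = 2" "qr r3 = 2" "qr b5 = 2" "qr b6 = 2" "qr h1 = 2" "qr h2 = 0" "qr h3 = 2" "qr h4 = 1"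
    unfolding pr_def qr_def RP RQ using ne ne2 ne3
    by (simp_all add: th gp gpc rank_def)
  have e1: "{a. prefers Red Gpref a ?P ?Q} = {h2}"
  proof -
    have "{a. prefers Red Gpref a ?P ?Q} = {a \<in> {r1,r2,r3,b5,b6,h1,h2,h3,h4}. qr a < pr a}"
      unfolding prefers_def pr_def qr_def U[symmetric] by simp
    also have "\<dots> = {h2}" using vals by auto
    finally show ?thesis .
  qed
  have e2: "{a. prefers Red Gpref a ?Q ?P} = {h3, h4}"
  proof -
    have "{a. prefers Red Gpref a ?Q ?P} = {a \<in> {r1,r2,r3,b5,b6,h1,h2,h3,h4}. pr a < qr a}"
      unfolding prefers_def pr_def qr_def U[symmetric] by simp
    also have "\<dots> = {h3, h4}" using vals by auto
    finally show ?thesis .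
  qed
  have "phi Red Gpref ?P ?Q < 0" unfolding phi_def e1 e2 using dist by simp
  then show ?thesis using oq unfolding popular_def by force
qed

theorem mainTheorem9:
  shows "\<forall>P. top_type P \<longrightarrow> \<not> popular 3 Red Gpref P"
proof (intro allI impI)
  fix P assume "top_type P"
  then obtain h1 h2 h3 h4 where d: "distinct [h1, h2, h3, h4]" and e: "{h1, h2, h3, h4} = {b1, b2, b3, b4}"
    and P: "P = {{r1, h1, h2}, {r2, r3, h3}, {b5, b6, h4}}" unfolding top_type_def by blast
  have "h1 \<in> {b1,b2,b3,b4}" "h2 \<in> {b1,b2,b3,b4}" "h3 \<in> {b1,b2,b3,b4}" "h4 \<in> {b1,b2,b3,b4}"
    using e by blast+
  from gen[OF this d e] show "\<not> popular 3 Red Gpref P" unfolding P .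
qed
end
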